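(* If $n>k>\ell\geq t+2$, then $r_2(n,k,\ell,t)>r_2(n,\ell,k,t)$, where $r_2(n,k,\ell,t)=S(n-t-1,k-t-1)\big((t+1)S(n-t,\ell-t)-tS(n-t-1,\ell-t-1)\big)$.
   Context: $S(n,k)$ denotes the Stirling number of the second kind, the number of partitions of an $n$-element set into $k$ nonempty blocks. *)

theory Defs
  imports "HOL-Combinatorics.Stirling"
begin

definition r2 :: "nat \<Rightarrow> nat \<Rightarrow> nat \<Rightarrow> nat \<Rightarrow> int" where
  "r2 n k l t = int (Stirling (n - t - 1) (k - t - 1)) *
     (int (t + 1) * int (Stirling (n - t) (l - t)) - int t * int (Stirling (n - t - 1) (l - t - 1)))"

end

theory Submission
  imports Defs
begin

lemma Stirling_pos: "j \<le> m \<Longrightarrow> 0 < j \<Longrightarrow> Stirling m j > 0"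
proof (induction m arbitrary: j)
  case 0 then show ?case by simp
next
  case (Suc m)
  then obtain j' where j: "j = Suc j'" by (cases j) auto
  show ?case
  proof (cases "j' = 0")
    case True
    have "Stirling (Suc m) (Suc 0) = 1" by (rule Stirling_1)
    then show ?thesis using j True by (simp only:)
  next
    case False
    then have "Stirling m j' > 0" using Suc j by simp
    then show ?thesis using j by simp
  qed
qed

definition T :: "nat \<Rightarrow> nat \<Rightarrow> nat" where
  "T m j = fact j * Stirling m j"

lemma T_Suc_Suc: "T (Suc m) (Suc j) = Suc j * (T m (Suc j) + T m j)"
  by (simp add: T_def algebra_simps)

lemma T_Suc_0: "T (Suc m) 0 = 0"
  by (simp add: T_def)

lemma T_0: "T 0 (Suc j) = 0"
  by (simp add: T_def)

lemma T_pos: "j \<le> m \<Longrightarrow> 0 < j \<Longrightarrow> T m j > 0"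
  using Stirling_pos by (simp add: T_def)

lemma Y_le:
  fixes x :: "nat \<Rightarrow> nat"
  assumes IH: "\<And>i j. i \<le> j \<Longrightarrow> x i * x (Suc j) \<le> x (Suc i) * x j"
    and ij: "i \<le> j"
  shows "(x (Suc i) + x i) * (x (Suc (Suc j)) + x (Suc j))
         \<le> (x (Suc (Suc i)) + x (Suc i)) * (x (Suc j) + x j)"
proof -
  have a: "x (Suc i) * x (Suc (Suc j)) \<le> x (Suc (Suc i)) * x (Suc j)" using IH ij by simp
  have b: "x i * x (Suc j) \<le> x (Suc i) * x j" using IH ij by simp
  have c: "x i * x (Suc (Suc j)) \<le> x (Suc (Suc i)) * x j"
  proof (cases "i = j")
    case True then show ?thesis by (simp add: mult.commute)
  next
    case False
    have "x i * x (Suc (Suc j)) \<le> x (Suc i) * x (Suc j)" using IH[of i "Suc j"] ij by simp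
    also have "\<dots> \<le> x (Suc (Suc i)) * x j" using IH[of "Suc i" j] ij False by simp
    finally show ?thesis .
  qed
  show ?thesis using a b c by (simp add: algebra_simps)
qed

lemma T_lc: "i \<le> j \<Longrightarrow> T m i * T m (Suc j) \<le> T m (Suc i) * T m j"
proof (induction m arbitrary: i j)
  case 0 then show ?case by (simp add: T_0)
next
  case (Suc m)
  show ?case
  proof (cases i)
    case 0 then show ?thesis by (simp add: T_Suc_0)
  next
    case (Suc i')
    then obtain j' where j: "j = Suc j'" using Suc.prems by (cases j) auto
    have ij: "i' \<le> j'" using Suc.prems j Suc by simp
    have Y: "(T m (Suc i') + T m i') * (T m (Suc (Suc j')) + T m (Suc j'))
         \<le> (T m (Suc (Suc i')) + T m (Suc i')) * (T m (Suc j') + T m j')"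
      by (rule Y_le[where x="T m", OF Suc.IH ij])
    have W: "Suc i' * Suc (Suc j') \<le> Suc (Suc i') * Suc j'" using ij by simp
    have "T (Suc m) i * T (Suc m) (Suc j) =
      (Suc i' * Suc (Suc j')) * ((T m (Suc i') + T m i') * (T m (Suc (Suc j')) + T m (Suc j')))"
      using Suc j by (simp only: T_Suc_Suc) (simp add: algebra_simps)
    also have "\<dots> \<le> (Suc (Suc i') * Suc j') * ((T m (Suc (Suc i')) + T m (Suc i')) * (T m (Suc j') + T m j'))"
      by (rule mult_mono[OF W Y]) auto
    also have "\<dots> = T (Suc m) (Suc i) * T (Suc m) j"
      using Suc j by (simp only: T_Suc_Suc) (simp add: algebra_simps)
    finally show ?thesis .
  qed
qed

lemma T_strict:
  assumes "0 < b" "b < a" "a < m"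
  shows "T m b * T m (Suc a) < T m (Suc b) * T m a"
proof -
  obtain m' where m: "m = Suc m'" using assms by (cases m) auto
  obtain b' where b: "b = Suc b'" using assms by (cases b) auto
  obtain a' where a: "a = Suc a'" using assms by (cases a) auto
  have ij: "b' \<le> a'" using assms a b by simp
  have Y: "(T m' (Suc b') + T m' b') * (T m' (Suc (Suc a')) + T m' (Suc a'))
         \<le> (T m' (Suc (Suc b')) + T m' (Suc b')) * (T m' (Suc a') + T m' a')"
    by (rule Y_le[where x="T m'", OF T_lc ij])
  have W: "Suc b' * Suc (Suc a') < Suc (Suc b') * Suc a'" using assms a b by simp
  have p1: "T m' (Suc b') > 0" using T_pos assms a b m by simp
  have p2: "T m' (Suc a') > 0" using T_pos assms a b m by simp
  have pos: "(T m' (Suc (Suc b')) + T m' (Suc b')) * (T m' (Suc a') + T m' a') > 0"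
    using p1 p2 by simp
  have "T m b * T m (Suc a) =
      (Suc b' * Suc (Suc a')) * ((T m' (Suc b') + T m' b') * (T m' (Suc (Suc a')) + T m' (Suc a')))"
    using m a b by (simp only: T_Suc_Suc) (simp add: algebra_simps)
  also have "\<dots> \<le> (Suc b' * Suc (Suc a')) * ((T m' (Suc (Suc b')) + T m' (Suc b')) * (T m' (Suc a') + T m' a'))"
    by (rule mult_left_mono[OF Y]) simp
  also have "\<dots> < (Suc (Suc b') * Suc a') * ((T m' (Suc (Suc b')) + T m' (Suc b')) * (T m' (Suc a') + T m' a'))"
    using W pos by simp
  also have "\<dots> = T m (Suc b) * T m a"
    using m a b by (simp only: T_Suc_Suc) (simp add: algebra_simps)
  finally show ?thesis .
qed

lemma S_strict:
  assumes "0 < b" "b < a" "a < m"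
  shows "Suc a * Stirling m b * Stirling m (Suc a) < Suc b * Stirling m (Suc b) * Stirling m a"
proof -
  have "fact b * fact a * (Suc a * Stirling m b * Stirling m (Suc a))
      = T m b * T m (Suc a)" by (simp add: T_def algebra_simps)
  also have "\<dots> < T m (Suc b) * T m a" by (rule T_strict[OF assms])
  also have "\<dots> = fact b * fact a * (Suc b * Stirling m (Suc b) * Stirling m a)"
    by (simp add: T_def algebra_simps)
  finally show ?thesis by simp
qed

theorem mainTheorem20:
  fixes n k l t :: nat
  assumes "n > k" and "k > l" and "l \<ge> t + 2"
  shows "r2 n k l t > r2 n l k t"
proof -
  define m where "m = n - t - 1"
  define a where "a = k - t - 1"
  define b where "b = l - t - 1"
  have nt: "n - t = Suc m" "k - t = Suc a" "l - t = Suc b" "n - t - 1 = m" "k - t - 1 = a" "l - t - 1 = b" using assms unfolding m_def a_def b_def by auto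
  have abm: "0 < b" "b < a" "a < m" using assms unfolding m_def a_def b_def by auto
  have e1: "r2 n k l t = int (Stirling m a) * (int (t+1) * int (Suc b) * int (Stirling m (Suc b)) + int (Stirling m b))"
    unfolding r2_def nt by (simp add: algebra_simps)
  have e2: "r2 n l k t = int (Stirling m b) * (int (t+1) * int (Suc a) * int (Stirling m (Suc a)) + int (Stirling m a))"
    unfolding r2_def nt by (simp add: algebra_simps)
  have s: "int (Suc a * Stirling m b * Stirling m (Suc a)) < int (Suc b * Stirling m (Suc b) * Stirling m a)"
    using S_strict[OF abm] by linarith
  have s2: "int (t+1) * int (Suc a * Stirling m b * Stirling m (Suc a)) < int (t+1) * int (Suc b * Stirling m (Suc b) * Stirling m a)"
    using s by (intro mult_strict_left_mono) auto
  show ?thesis unfolding e1 e2 using s2 by (simp add: algebra_simps)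
qed

end
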